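(* Let $q\ge 1$, let $P\in\mathcal{P}_q$, and let $d_{\mathrm{pLip}_{1,q-1}}(P,Q)=\sup_{f\in\mathrm{pLip}_{1,q-1}}|\mathbb{E}_{X\sim P}[f(X)]-\mathbb{E}_{Y\sim Q}[f(Y)]|$. For a sequence of probability measures $Q_1,Q_2,\dots\in\mathcal{P}_q$ the following are equivalent: (a) $d_{\mathrm{pLip}_{1,q-1}}(Q_n,P)\to0$; (b) $Q_n$ converges weakly to $P$ and $\mathbb{E}_{X\sim Q_n}[\|X\|_2^q]\to\mathbb{E}_{X\sim P}[\|X\|_2^q]$.
   Context: A function $h:\mathbb{R}^D\to\mathbb{R}$ is pseudo-Lipschitz of order $r\ge0$ if there is $C>0$ with $|h(x)-h(y)|\le C(1+\|x\|_2^r+\|y\|_2^r)\|x-y\|_2$ for all $x,y\in\mathbb{R}^D$; the smallest such $C$ is $\tilde\mu_{\mathrm{pLip}}(h)_{1,r}$. $\mathrm{pLip}_{1,r}$ is the set of pseudo-Lipschitz functions of order $r$ with $\tilde\mu_{\mathrm{pLip}}(h)_{1,r}\le1$. $\mathcal{P}_q$ is the set of probability measures on $\mathbb{R}^D$ with finite $q$-th moment $\int\|x\|_2^q d\mu<\infty$. *)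

theory Defs
  imports "HOL-Analysis.Analysis" "HOL-Probability.Probability"
begin

definition npow :: "'a::real_normed_vector \<Rightarrow> real \<Rightarrow> real" where
  "npow x r = (if r = 0 then 1 else norm x powr r)"

definition pseudo_lipschitz :: "real \<Rightarrow> real \<Rightarrow> ('a::euclidean_space \<Rightarrow> real) \<Rightarrow> bool" where
  "pseudo_lipschitz r C h \<longleftrightarrow>
     (\<forall>x y. \<bar>h x - h y\<bar> \<le> C * (1 + npow x r + npow y r) * norm (x - y))"

text \<open>Smallest pseudo-Lipschitz constant (the infimum is attained, the condition being closed in C).\<close>
definition pLip_const :: "real \<Rightarrow> ('a::euclidean_space \<Rightarrow> real) \<Rightarrow> real" where
  "pLip_const r h = Inf {C. C > 0 \<and> pseudo_lipschitz r C h}"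

definition pLip :: "real \<Rightarrow> ('a::euclidean_space \<Rightarrow> real) set" where
  "pLip r = {h. (\<exists>C>0. pseudo_lipschitz r C h) \<and> pLip_const r h \<le> 1}"

definition Pq :: "real \<Rightarrow> 'a::euclidean_space measure set" where
  "Pq q = {M. prob_space M \<and> sets M = sets borel \<and> integrable M (\<lambda>x. norm x powr q)}"

definition d_pLip :: "real \<Rightarrow> 'a::euclidean_space measure \<Rightarrow> 'a measure \<Rightarrow> real" where
  "d_pLip r P Q = (SUP f \<in> pLip r. \<bar>(\<integral>x. f x \<partial>P) - (\<integral>y. f y \<partial>Q)\<bar>)"

definition weak_conv_seq :: "(nat \<Rightarrow> 'a::euclidean_space measure) \<Rightarrow> 'a measure \<Rightarrow> bool" where
  "weak_conv_seq Q P \<longleftrightarrow>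
     (\<forall>f :: 'a \<Rightarrow> real. continuous_on UNIV f \<and> bounded (range f) \<longrightarrow>
        (\<lambda>n. \<integral>x. f x \<partial>(Q n)) \<longlonglongrightarrow> (\<integral>x. f x \<partial>P))"

end

theory Submission
  imports Defs
begin

lemma npow_nonneg: "npow x r \<ge> 0"
  by (simp add: npow_def)

lemma npow_le_w:
  assumes "q \<ge> 1"
  shows "npow x (q - 1) \<le> 1 + norm x powr q"
proof (cases "q = 1")
  case True then show ?thesis by (simp add: npow_def)
next
  case False
  show ?thesis
  proof (cases "norm x \<le> 1")
    case True
    then have "norm x powr (q-1) \<le> 1 powr (q-1)" using assms
      by (intro powr_mono2) auto
    then have "norm x powr (q-1) \<le> 1" by simp
    moreover have "npow x (q-1) = norm x powr (q-1)" using False by (simp add: npow_def)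
    ultimately show ?thesis using powr_ge_zero[of "norm x" q] by linarith
  next
    case F2: False
    then have "norm x powr (q-1) \<le> norm x powr q"
      by (intro powr_mono) auto
    then show ?thesis using False by (simp add: npow_def)
  qed
qed

lemma npow_mul:
  assumes "q \<ge> 1"
  shows "npow x (q - 1) * norm x = norm x powr q"
proof (cases "q = 1")
  case True then show ?thesis by (simp add: npow_def)
next
  case False
  then show ?thesis
  proof (cases "x = 0")
    case True then show ?thesis using False by (simp add: npow_def)
  next
    case F: False
    have "norm x powr (q-1) * norm x powr 1 = norm x powr (q-1+1)"
      by (simp only: powr_add[symmetric])
    then show ?thesis using False F by (simp add: npow_def)
  qed
qed

lemma norm_le_w:
  assumes "q \<ge> 1"
  shows "norm x \<le> 1 + norm x powr q"
proof (cases "norm x \<le> 1")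
  case True
  then show ?thesis by (smt (verit) powr_ge_zero)
next
  case False
  then have "norm x powr 1 \<le> norm x powr q" using assms by (intro powr_mono) auto
  then show ?thesis using False by simp
qed

lemma npow0_le: "npow (0::'a::real_normed_vector) r \<le> 1"
  by (simp add: npow_def)

lemma PL_mono: fixes h :: "'a::euclidean_space \<Rightarrow> real" shows "pseudo_lipschitz r C h \<Longrightarrow> C \<le> C' \<Longrightarrow> pseudo_lipschitz r C' h"
  unfolding pseudo_lipschitz_def
proof safe
  fix x y :: 'a
  assume H: "\<forall>x y. \<bar>h x - h y\<bar> \<le> C * (1 + npow x r + npow y r) * norm (x - y)" and "C \<le> C'"
  have "0 \<le> (1 + npow x r + npow y r) * norm (x - y)"
    using npow_nonneg[of x r] npow_nonneg[of y r] by simp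
  then have "C * ((1 + npow x r + npow y r) * norm (x - y)) \<le> C' * ((1 + npow x r + npow y r) * norm (x - y))"
    using \<open>C \<le> C'\<close> by (intro mult_right_mono) auto
  then show "\<bar>h x - h y\<bar> \<le> C' * (1 + npow x r + npow y r) * norm (x - y)"
    using H[rule_format, of x y] by (simp add: mult.assoc)
qed

lemma PL_scale:
  fixes h :: "'a::euclidean_space \<Rightarrow> real"
  assumes "pseudo_lipschitz r C h" "c > 0"
  shows "pseudo_lipschitz r (C / c) (\<lambda>x. h x / c)"
  using assms unfolding pseudo_lipschitz_def
proof safe
  fix x y
  assume H: "\<forall>x y. \<bar>h x - h y\<bar> \<le> C * (1 + npow x r + npow y r) * norm (x - y)"
  have "\<bar>h x / c - h y / c\<bar> = \<bar>h x - h y\<bar> / c" using \<open>c>0\<close>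
    by (simp add: diff_divide_distrib[symmetric])
  also have "\<dots> \<le> C * (1 + npow x r + npow y r) * norm (x - y) / c"
    using H \<open>c>0\<close> by (simp add: divide_right_mono)
  finally show "\<bar>h x / c - h y / c\<bar> \<le> C / c * (1 + npow x r + npow y r) * norm (x - y)"
    by simp
qed

lemma pLipI: fixes h :: "'a::euclidean_space \<Rightarrow> real"
  shows "pseudo_lipschitz r 1 h \<Longrightarrow> h \<in> pLip r"
  unfolding pLip_def pLip_const_def
  by (auto intro!: cInf_lower bdd_belowI[where m=0] exI[of _ 1])

lemma le_one_mult:
  fixes a K :: real
  assumes "\<And>C. C > 1 \<Longrightarrow> a \<le> C * K" "K \<ge> 0"
  shows "a \<le> K"
proof (rule ccontr)
  assume "\<not> a \<le> K"
  then have "a > K" by simp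
  then have K0: "K > 0" using assms(1)[of 2] by auto
  obtain t where t: "t = a / K" by simp
  have t1: "t > 1" using \<open>a > K\<close> K0 t by simp
  define C where "C = (1 + t) / 2"
  have "C > 1" unfolding C_def using t1 by (simp add: field_simps)
  have "C < t" unfolding C_def using t1 by (simp add: field_simps)
  then have "C * K < a" using K0 t by (simp add: pos_less_divide_eq)
  with assms(1)[OF \<open>C > 1\<close>] show False by simp
qed

lemma pLipD:
  fixes h :: "'a::euclidean_space \<Rightarrow> real"
  assumes "h \<in> pLip r"
  shows "pseudo_lipschitz r 1 h"
proof -
  let ?S = "{C. C > 0 \<and> pseudo_lipschitz r C h}"
  from assms obtain C0 where "C0 > 0" "pseudo_lipschitz r C0 h" and I: "Inf ?S \<le> 1"
    unfolding pLip_def pLip_const_def by auto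
  then have ne: "?S \<noteq> {}" by auto
  have bdd: "bdd_below ?S" by (auto intro!: bdd_belowI[where m=0])
  have all: "pseudo_lipschitz r C h" if "C > 1" for C
  proof -
    have "Inf ?S < C" using I that by simp
    then obtain C' where "C' \<in> ?S" "C' < C" using cInf_less_iff[OF ne bdd] by auto
    then show ?thesis using PL_mono[of r C' h C] by auto
  qed
  show ?thesis unfolding pseudo_lipschitz_def
  proof (intro allI)
    fix x y :: 'a
    have "0 \<le> (1 + npow x r + npow y r) * norm (x - y)"
      using npow_nonneg[of x r] npow_nonneg[of y r] by simp
    moreover have "\<bar>h x - h y\<bar> \<le> C * ((1 + npow x r + npow y r) * norm (x - y))" if "C > 1" for C
      using all[OF that] unfolding pseudo_lipschitz_def by (simp add: mult.assoc)
    ultimately have "\<bar>h x - h y\<bar> \<le> (1 + npow x r + npow y r) * norm (x - y)"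
      by (rule le_one_mult[rotated])
    then show "\<bar>h x - h y\<bar> \<le> 1 * (1 + npow x r + npow y r) * norm (x - y)"
      by simp
  qed
qed

lemma PL_bound:
  fixes h :: "'a::euclidean_space \<Rightarrow> real"
  assumes "pseudo_lipschitz (q - 1) 1 h" "q \<ge> 1"
  shows "\<bar>h x - h 0\<bar> \<le> 3 * (1 + norm x powr q)"
proof -
  have "\<bar>h x - h 0\<bar> \<le> (1 + npow x (q-1) + npow (0::'a) (q-1)) * norm x"
  proof -
    have "\<bar>h x - h 0\<bar> \<le> 1 * (1 + npow x (q-1) + npow (0::'a) (q-1)) * norm (x - 0)"
      using assms(1)[unfolded pseudo_lipschitz_def, rule_format, of x 0] .
    then show ?thesis by simp
  qed
  also have "\<dots> \<le> (2 + npow x (q-1)) * norm x"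
    using npow0_le[where 'a='a, of "q-1"] by (intro mult_right_mono) simp_all
  also have "\<dots> = 2 * norm x + norm x powr q"
    using npow_mul[OF assms(2), of x] by (simp add: algebra_simps)
  also have "\<dots> \<le> 3 * (1 + norm x powr q)"
    using norm_le_w[OF assms(2), of x] by simp
  finally show ?thesis .
qed

lemma PL_loc:
  fixes h :: "'a::euclidean_space \<Rightarrow> real"
  assumes "pseudo_lipschitz (q - 1) C h" "q \<ge> 1" "norm x \<le> R" "norm y \<le> R" "C \<ge> 0"
  shows "\<bar>h x - h y\<bar> \<le> C * (3 + 2 * R powr q) * norm (x - y)"
proof -
  have R0: "R \<ge> 0" using assms(3) norm_ge_zero order_trans by blast
  have "norm x powr q \<le> R powr q" using assms by (intro powr_mono2) auto
  moreover have "norm y powr q \<le> R powr q" using assms by (intro powr_mono2) auto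
  ultimately have "1 + npow x (q-1) + npow y (q-1) \<le> 3 + 2 * R powr q"
    using npow_le_w[OF assms(2), of x] npow_le_w[OF assms(2), of y] by simp
  then have "C * (1 + npow x (q-1) + npow y (q-1)) * norm (x - y) \<le> C * (3 + 2 * R powr q) * norm (x - y)"
    using assms(5) by (intro mult_right_mono mult_left_mono) auto
  then show ?thesis using assms(1) unfolding pseudo_lipschitz_def by (meson order_trans)
qed

lemma PL_cont:
  fixes h :: "'a::euclidean_space \<Rightarrow> real"
  assumes "pseudo_lipschitz (q - 1) C h" "q \<ge> 1" "C \<ge> 0"
  shows "continuous_on UNIV h"
proof -
  have "isCont h x" for x
    unfolding continuous_at_eps_delta
  proof (intro allI impI)
    fix e :: real assume "e > 0"
    define K where "K = C * (3 + 2 * (norm x + 1) powr q) + 1"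
    have K: "K > 0" unfolding K_def using assms(3) by (intro add_nonneg_pos mult_nonneg_nonneg) auto
    show "\<exists>d>0. \<forall>x'. dist x' x < d \<longrightarrow> dist (h x') (h x) < e"
    proof (intro exI[of _ "min 1 (e / K)"] conjI allI impI)
      show "min 1 (e / K) > 0" using K \<open>e>0\<close> by simp
      fix y assume d: "dist y x < min 1 (e / K)"
      have "norm y \<le> norm x + 1" using d norm_triangle_ineq2[of y x] by (simp add: dist_norm)
      then have "\<bar>h y - h x\<bar> \<le> C * (3 + 2 * (norm x + 1) powr q) * norm (y - x)"
        using PL_loc[OF assms(1,2), of y "norm x + 1" x] assms(3) by simp
      also have "\<dots> \<le> K * norm (y - x)" unfolding K_def by (intro mult_right_mono) auto
      also have "\<dots> < K * (e / K)" using d K by (intro mult_strict_left_mono) (auto simp: dist_norm)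
      also have "\<dots> = e" using K by simp
      finally show "dist (h y) (h x) < e" by (simp add: dist_real_def)
    qed
  qed
  then show ?thesis by (simp add: continuous_at_imp_continuous_on)
qed

lemma PqD:
  assumes "M \<in> Pq q"
  shows "prob_space M" "sets M = sets borel" "integrable M (\<lambda>x. norm x powr q)"
  using assms unfolding Pq_def by auto

lemma Pq_meas:
  fixes M :: "'a::euclidean_space measure" and g :: "'a \<Rightarrow> real"
  assumes "M \<in> Pq q" "g \<in> borel_measurable borel"
  shows "g \<in> borel_measurable M"
proof -
  have "(borel_measurable M :: ('a \<Rightarrow> real) set) = borel_measurable borel"
    by (rule measurable_cong_sets) (simp_all add: PqD(2)[OF assms(1)])
  then show ?thesis using assms(2) by (simp only:)
qed

lemma Pq_cont_meas:
  fixes M :: "'a::euclidean_space measure" and g :: "'a \<Rightarrow> real"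
  assumes "M \<in> Pq q" "continuous_on UNIV g"
  shows "g \<in> borel_measurable M"
  using Pq_meas[OF assms(1) borel_measurable_continuous_onI[OF assms(2)]] .

lemma Pq_int_const:
  fixes M :: "'a::euclidean_space measure" and c :: real
  assumes "M \<in> Pq q"
  shows "integral\<^sup>L M (\<lambda>x. c) = c"
  using prob_space.prob_space[OF PqD(1)[OF assms]] by (simp add: lebesgue_integral_const)

lemma Pq_integrable_const:
  fixes M :: "'a::euclidean_space measure" and c :: real
  assumes "M \<in> Pq q"
  shows "integrable M (\<lambda>x. c)"
  using PqD(1)[OF assms] by (simp add: prob_space_def finite_measure.integrable_const)

lemma Pq_integrable_w:
  fixes M :: "'a::euclidean_space measure"
  assumes "M \<in> Pq q"
  shows "integrable M (\<lambda>x. a + b * norm x powr q)"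
  using Pq_integrable_const[OF assms, of a] PqD(3)[OF assms] by (intro Bochner_Integration.integrable_add Bochner_Integration.integrable_mult_right) auto

lemma Pq_integrable_dom:
  fixes g :: "'a::euclidean_space \<Rightarrow> real"
  assumes "M \<in> Pq q" "g \<in> borel_measurable borel" "\<And>x. \<bar>g x\<bar> \<le> a + b * norm x powr q"
  shows "integrable M g"
proof (rule Bochner_Integration.integrable_bound[OF Pq_integrable_w[OF assms(1), of a b]])
  show "g \<in> borel_measurable M" using Pq_meas[OF assms(1,2)] .
  show "AE x in M. norm (g x) \<le> norm (a + b * norm x powr q)"
    using assms(3) by (auto intro!: AE_I2 order_trans[OF _ abs_ge_self])
qed

lemma Pq_integral_w:
  fixes M :: "'a::euclidean_space measure"
  assumes "M \<in> Pq q"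
  shows "integral\<^sup>L M (\<lambda>x. a + b * norm x powr q) = a + b * integral\<^sup>L M (\<lambda>x. norm x powr q)"
  using Pq_integrable_const[OF assms, of a] PqD(3)[OF assms] Pq_int_const[OF assms, of a] by simp

lemma pLip_integrable:
  fixes f :: "'a::euclidean_space \<Rightarrow> real"
  assumes "M \<in> Pq q" "q \<ge> 1" "f \<in> pLip (q - 1)"
  shows "integrable M f"
proof -
  have PL: "pseudo_lipschitz (q-1) 1 f" using pLipD[OF assms(3)] .
  show ?thesis
  proof (rule Pq_integrable_dom[OF assms(1), of f "\<bar>f 0\<bar> + 3" 3])
    show "f \<in> borel_measurable borel"
      using borel_measurable_continuous_onI[OF PL_cont[OF PL assms(2)]] by simp
    fix x
    show "\<bar>f x\<bar> \<le> \<bar>f 0\<bar> + 3 + 3 * norm x powr q"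
      using PL_bound[OF PL assms(2), of x] by (smt (verit))
  qed
qed

lemma abs_int_le:
  fixes g :: "'a \<Rightarrow> real"
  assumes "integrable M g" "integrable M u" "\<And>x. \<bar>g x\<bar> \<le> u x"
  shows "\<bar>integral\<^sup>L M g\<bar> \<le> integral\<^sup>L M u"
proof -
  have "integral\<^sup>L M g \<le> integral\<^sup>L M u"
    using assms by (intro integral_mono) (auto simp: abs_le_iff)
  moreover have "integral\<^sup>L M (\<lambda>x. - g x) \<le> integral\<^sup>L M u"
    using assms by (intro integral_mono) (auto simp: abs_le_iff)
  ultimately show ?thesis by simp
qed

lemma pLip_diff_bound:
  fixes f :: "'a::euclidean_space \<Rightarrow> real"
  assumes "M \<in> Pq q" "N \<in> Pq q" "q \<ge> 1" "f \<in> pLip (q - 1)"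
  shows "\<bar>integral\<^sup>L M f - integral\<^sup>L N f\<bar> \<le>
     (3 + 3 * integral\<^sup>L M (\<lambda>x. norm x powr q)) + (3 + 3 * integral\<^sup>L N (\<lambda>x. norm x powr q))"
proof -
  have PL: "pseudo_lipschitz (q-1) 1 f" using pLipD[OF assms(4)] .
  have bd: "\<bar>f x - f 0\<bar> \<le> 3 + 3 * norm x powr q" for x using PL_bound[OF PL assms(3), of x] by simp
  have iM: "integrable M f" and iN: "integrable N f" using pLip_integrable assms by blast+
  have eM: "integral\<^sup>L M (\<lambda>x. f x - f 0) = integral\<^sup>L M f - f 0"
    using iM Pq_integrable_const[OF assms(1), of "f 0"] Pq_int_const[OF assms(1), of "f 0"] by (simp add: integral_diff)
  have eN: "integral\<^sup>L N (\<lambda>x. f x - f 0) = integral\<^sup>L N f - f 0"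
    using iN Pq_integrable_const[OF assms(2), of "f 0"] Pq_int_const[OF assms(2), of "f 0"] by (simp add: integral_diff)
  have "\<bar>integral\<^sup>L M (\<lambda>x. f x - f 0)\<bar> \<le> 3 + 3 * integral\<^sup>L M (\<lambda>x. norm x powr q)"
    using abs_int_le[OF _ Pq_integrable_w[OF assms(1), of 3 3] bd] iM Pq_integrable_const[OF assms(1), of "f 0"]
      Pq_integral_w[OF assms(1)] by auto
  moreover have "\<bar>integral\<^sup>L N (\<lambda>x. f x - f 0)\<bar> \<le> 3 + 3 * integral\<^sup>L N (\<lambda>x. norm x powr q)"
    using abs_int_le[OF _ Pq_integrable_w[OF assms(2), of 3 3] bd] iN Pq_integrable_const[OF assms(2), of "f 0"]
      Pq_integral_w[OF assms(2)] by auto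
  ultimately show ?thesis using eM eN by linarith
qed

lemma zero_pLip: "(\<lambda>x. 0) \<in> pLip r"
  by (rule pLipI) (auto simp: pseudo_lipschitz_def npow_def intro!: mult_nonneg_nonneg add_nonneg_nonneg)

lemma d_bdd:
  fixes M N :: "'a::euclidean_space measure"
  assumes "M \<in> Pq q" "N \<in> Pq q" "q \<ge> 1"
  shows "bdd_above ((\<lambda>f. \<bar>integral\<^sup>L M f - integral\<^sup>L N f\<bar>) ` pLip (q - 1))"
  using pLip_diff_bound[OF assms] by (intro bdd_aboveI2) blast

lemma d_upper:
  fixes M N :: "'a::euclidean_space measure"
  assumes "M \<in> Pq q" "N \<in> Pq q" "q \<ge> 1" "f \<in> pLip (q - 1)"
  shows "\<bar>integral\<^sup>L M f - integral\<^sup>L N f\<bar> \<le> d_pLip (q - 1) M N"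
  unfolding d_pLip_def by (rule cSUP_upper[OF assms(4) d_bdd[OF assms(1-3)]])

lemma d_nonneg:
  fixes M N :: "'a::euclidean_space measure"
  assumes "M \<in> Pq q" "N \<in> Pq q" "q \<ge> 1"
  shows "0 \<le> d_pLip (q - 1) M N"
  using d_upper[OF assms zero_pLip] by simp

lemma d_least:
  fixes M N :: "'a::euclidean_space measure"
  assumes "\<And>f. f \<in> pLip (q - 1) \<Longrightarrow> \<bar>integral\<^sup>L M f - integral\<^sup>L N f\<bar> \<le> B"
  shows "d_pLip (q - 1) M N \<le> B"
  unfolding d_pLip_def using zero_pLip assms by (intro cSUP_least) auto

lemma d_scaled:
  fixes M N :: "'a::euclidean_space measure"
  assumes "M \<in> Pq q" "N \<in> Pq q" "q \<ge> 1" "pseudo_lipschitz (q - 1) K h" "K > 0"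
  shows "\<bar>integral\<^sup>L M h - integral\<^sup>L N h\<bar> \<le> K * d_pLip (q - 1) M N"
proof -
  have "(\<lambda>x. h x / K) \<in> pLip (q - 1)"
    using PL_scale[OF assms(4,5)] assms(5) by (intro pLipI) simp
  from d_upper[OF assms(1-3) this]
  have "\<bar>integral\<^sup>L M h / K - integral\<^sup>L N h / K\<bar> \<le> d_pLip (q - 1) M N" by simp
  then have "\<bar>integral\<^sup>L M h - integral\<^sup>L N h\<bar> / K \<le> d_pLip (q - 1) M N"
    using assms(5) by (simp add: diff_divide_distrib[symmetric])
  then show ?thesis using assms(5) by (simp add: divide_le_eq mult.commute)
qed

lemma powq_diff:
  fixes a b q :: real
  assumes "0 \<le> b" "b \<le> a" "q \<ge> 1"
  shows "a powr q - b powr q \<le> q * a powr (q - 1) * (a - b)"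
proof (cases "b = 0")
  case True
  show ?thesis
  proof (cases "a = 0")
    case True then show ?thesis using \<open>b = 0\<close> by simp
  next
    case False
    then have a0: "a > 0" using assms by simp
    have "a powr (q-1) * a powr 1 = a powr (q - 1 + 1)" by (simp only: powr_add[symmetric])
    then have "a powr q = a powr (q-1) * a" using a0 by simp
    moreover have "a powr (q-1) * a \<le> q * (a powr (q-1) * a)"
      using assms(3) a0 mult_right_mono[of 1 q "a powr (q-1) * a"] by simp
    ultimately show ?thesis using True by (simp add: mult.assoc)
  qed
next
  case False
  then have b0: "b > 0" using assms by simp
  show ?thesis
  proof (cases "b = a")
    case True then show ?thesis by simp
  next
    case False
    then have "b < a" using assms by simp
    have "\<exists>z>b. z < a \<and> a powr q - b powr q = (a - b) * (q * z powr (q - 1))"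
      by (rule MVT2[OF \<open>b < a\<close>, where f="\<lambda>z. z powr q"])
         (rule has_real_derivative_powr, use b0 in linarith)
    then obtain z where z: "z > b" "z < a" "a powr q - b powr q = (a - b) * (q * z powr (q - 1))" by blast
    have "z powr (q-1) \<le> a powr (q-1)" using z b0 assms by (intro powr_mono2) auto
    then have "(a - b) * (q * z powr (q - 1)) \<le> (a - b) * (q * a powr (q - 1))"
      using z assms by (intro mult_left_mono) auto
    then show ?thesis using z by (simp add: algebra_simps)
  qed
qed

lemma powq_aux:
  fixes q A B s t :: real
  assumes "q \<ge> 1" "A \<ge> 0" "B \<ge> 0" "s \<le> t"
  shows "q * A * (t - s) \<le> q * (A + B) * \<bar>t - s\<bar>"
proof -
  have "A * (t - s) \<le> (A + B) * (t - s)" using assms by (intro mult_right_mono) auto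
  then have "q * (A * (t - s)) \<le> q * ((A + B) * (t - s))" using assms by (intro mult_left_mono) auto
  then show ?thesis using assms by (simp add: mult.assoc)
qed

lemma powq_PL:
  fixes q :: real
  assumes "q \<ge> 1"
  shows "pseudo_lipschitz (q - 1) q (\<lambda>x::'a::euclidean_space. norm x powr q)"
  unfolding pseudo_lipschitz_def
proof (intro allI)
  fix x y :: 'a
  have tri: "\<bar>norm x - norm y\<bar> \<le> norm (x - y)" by (rule norm_triangle_ineq3)
  show "\<bar>norm x powr q - norm y powr q\<bar> \<le> q * (1 + npow x (q - 1) + npow y (q - 1)) * norm (x - y)"
  proof (cases "q = 1")
    case True
    then have "\<bar>norm x powr q - norm y powr q\<bar> = \<bar>norm x - norm y\<bar>" by simp
    moreover have "npow x (q - 1) = 1" "npow y (q - 1) = 1" using True by (auto simp: npow_def)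
    ultimately show ?thesis using tri True by simp
  next
    case False
    then have np: "npow x (q-1) = norm x powr (q-1)" "npow y (q-1) = norm y powr (q-1)"
      by (auto simp: npow_def)
    let ?A = "norm x powr (q-1)" and ?B = "norm y powr (q-1)"
    have A0: "?A \<ge> 0" "?B \<ge> 0" by simp_all
    have A: "\<bar>norm x powr q - norm y powr q\<bar> \<le> q * (?A + ?B) * \<bar>norm x - norm y\<bar>"
    proof (cases "norm y \<le> norm x")
      case True
      have 1: "norm x powr q - norm y powr q \<le> q * ?A * (norm x - norm y)"
        by (rule powq_diff) (use True assms in auto)
      have 2: "norm y powr q \<le> norm x powr q" using True assms by (intro powr_mono2) auto
      have 3: "q * ?A * (norm x - norm y) \<le> q * (?A + ?B) * \<bar>norm x - norm y\<bar>"
        using powq_aux[OF assms A0 True] .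
      have "\<bar>norm x powr q - norm y powr q\<bar> = norm x powr q - norm y powr q" using 2 by simp
      then show ?thesis using 1 3 by linarith
    next
      case False
      then have F: "norm x \<le> norm y" by simp
      have 1: "norm y powr q - norm x powr q \<le> q * ?B * (norm y - norm x)"
        by (rule powq_diff) (use F assms in auto)
      have 2: "norm x powr q \<le> norm y powr q" using F assms by (intro powr_mono2) auto
      have 3: "q * ?B * (norm y - norm x) \<le> q * (?A + ?B) * \<bar>norm x - norm y\<bar>"
        using powq_aux[OF assms A0(2,1) F] by (simp add: add.commute abs_minus_commute)
      have "\<bar>norm x powr q - norm y powr q\<bar> = norm y powr q - norm x powr q" using 2 by simp
      then show ?thesis using 1 3 by linarith
    qed
    have "q * (?A + ?B) * \<bar>norm x - norm y\<bar> \<le> q * (1 + ?A + ?B) * norm (x - y)"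
    proof -
      have "(?A + ?B) * \<bar>norm x - norm y\<bar> \<le> (1 + ?A + ?B) * norm (x - y)"
        using A0 tri by (intro mult_mono) auto
      then show ?thesis using assms by (simp add: mult.assoc mult_left_mono)
    qed
    with A np show ?thesis by simp
  qed
qed

lemma moment_conv:
  fixes P :: "'a::euclidean_space measure" and Q :: "nat \<Rightarrow> 'a measure"
  assumes "q \<ge> 1" "P \<in> Pq q" "\<And>n. Q n \<in> Pq q" "(\<lambda>n. d_pLip (q - 1) (Q n) P) \<longlonglongrightarrow> 0"
  shows "(\<lambda>n. \<integral>x. norm x powr q \<partial>(Q n)) \<longlonglongrightarrow> (\<integral>x. norm x powr q \<partial>P)"
proof -
  have q0: "q > 0" using assms(1) by simp
  have le: "norm ((\<integral>x. norm x powr q \<partial>(Q n)) - (\<integral>x. norm x powr q \<partial>P)) \<le> q * d_pLip (q - 1) (Q n) P" for n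
    using d_scaled[OF assms(3) assms(2) assms(1) powq_PL[OF assms(1)] q0] by (simp only: real_norm_def)
  have "(\<lambda>n. q * d_pLip (q - 1) (Q n) P) \<longlonglongrightarrow> q * 0"
    by (rule tendsto_mult[OF tendsto_const assms(4)])
  then have lim: "(\<lambda>n. q * d_pLip (q - 1) (Q n) P) \<longlonglongrightarrow> 0" by (simp only: mult_zero_right)
  have "(\<lambda>n. (\<integral>x. norm x powr q \<partial>(Q n)) - (\<integral>x. norm x powr q \<partial>P)) \<longlonglongrightarrow> 0"
    by (rule Lim_null_comparison[OF always_eventually lim]) (use le in blast)
  then show ?thesis by (simp only: LIM_zero_iff)
qed

definition infconv :: "('a::metric_space \<Rightarrow> real) \<Rightarrow> real \<Rightarrow> 'a \<Rightarrow> real" where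
  "infconv f k x = (INF y. f y + k * dist x y)"

lemma infconv_bdd:
  assumes "\<And>u. \<bar>f u\<bar> \<le> B" "k \<ge> 0"
  shows "bdd_below (range (\<lambda>y. f y + k * dist x y))"
proof (rule bdd_belowI2[where m="-B"])
  fix y
  have "- B \<le> f y" using assms(1)[of y] by linarith
  moreover have "0 \<le> k * dist x y" using assms(2) by simp
  ultimately show "- B \<le> f y + k * dist x y" by linarith
qed

lemma infconv_le:
  assumes "\<And>u. \<bar>f u\<bar> \<le> B" "k \<ge> 0"
  shows "infconv f k x \<le> f x"
proof -
  have "infconv f k x \<le> f x + k * dist x x"
    unfolding infconv_def by (rule cINF_lower[OF infconv_bdd[where f=f and B=B, OF assms]]) simp
  then show ?thesis by simp
qed

lemma infconv_ge:
  assumes "\<And>u. \<bar>f u\<bar> \<le> B" "k \<ge> 0"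
  shows "- B \<le> infconv f k x"
  unfolding infconv_def
proof (rule cINF_greatest)
  fix y
  have "- B \<le> f y" using assms(1)[of y] by linarith
  moreover have "0 \<le> k * dist x y" using assms(2) by simp
  ultimately show "- B \<le> f y + k * dist x y" by linarith
qed simp

lemma infconv_lip:
  assumes "\<And>u. \<bar>f u\<bar> \<le> B" "k \<ge> 0"
  shows "infconv f k x \<le> infconv f k z + k * dist x z"
proof -
  have "infconv f k x - k * dist x z \<le> infconv f k z"
    unfolding infconv_def
  proof (rule cINF_greatest)
    fix y
    have "(INF y. f y + k * dist x y) \<le> f y + k * dist x y"
      by (rule cINF_lower[OF infconv_bdd[where f=f and B=B, OF assms]]) simp
    moreover have "k * dist x y \<le> k * dist z y + k * dist x z"
      using dist_triangle[of x y z] assms(2) by (simp add: distrib_left[symmetric] mult_left_mono)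
    ultimately show "(INF y. f y + k * dist x y) - k * dist x z \<le> f y + k * dist z y" by linarith
  qed simp
  then show ?thesis by linarith
qed

lemma infconv_PL:
  fixes f :: "'a::euclidean_space \<Rightarrow> real"
  assumes "\<And>u. \<bar>f u\<bar> \<le> B" "k \<ge> 0"
  shows "pseudo_lipschitz r k (infconv f k)"
  unfolding pseudo_lipschitz_def
proof (intro allI)
  fix x y :: 'a
  have "\<bar>infconv f k x - infconv f k y\<bar> \<le> k * dist x y"
    using infconv_lip[where f=f and B=B and x=x and z=y, OF assms] infconv_lip[where f=f and B=B and x=y and z=x, OF assms] by (simp add: dist_commute abs_le_iff)
  also have "\<dots> = k * 1 * norm (x - y)" by (simp add: dist_norm)
  also have "\<dots> \<le> k * (1 + npow x r + npow y r) * norm (x - y)"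
    using assms(2) npow_nonneg[of x r] npow_nonneg[of y r] by (intro mult_right_mono mult_left_mono) auto
  finally show "\<bar>infconv f k x - infconv f k y\<bar> \<le> k * (1 + npow x r + npow y r) * norm (x - y)" .
qed

lemma infconv_lim:
  fixes f :: "'a::euclidean_space \<Rightarrow> real"
  assumes "\<And>u. \<bar>f u\<bar> \<le> B" "continuous_on UNIV f"
  shows "(\<lambda>n. infconv f (real n) x) \<longlonglongrightarrow> f x"
proof (rule LIMSEQ_I)
  fix e :: real assume e: "e > 0"
  have "isCont f x" using assms(2) by (simp add: continuous_on_eq_continuous_at)
  then obtain d where d: "d > 0" "\<And>y. dist y x < d \<Longrightarrow> dist (f y) (f x) < e / 2"
    unfolding continuous_at_eps_delta using e by (meson half_gt_zero)
  have B0: "B \<ge> 0" using assms(1)[of x] by linarith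
  obtain N :: nat where N: "real N > 2 * B / d" using reals_Archimedean2 by blast
  show "\<exists>no. \<forall>n\<ge>no. norm (infconv f (real n) x - f x) < e"
  proof (intro exI allI impI)
    fix n assume "N \<le> n"
    then have nN: "real n > 2 * B / d" using N by linarith
    then have nd: "real n * d \<ge> 2 * B" using d(1) by (simp add: field_simps)
    have "f x - e / 2 \<le> infconv f (real n) x"
      unfolding infconv_def
    proof (rule cINF_greatest)
      fix y
      show "f x - e / 2 \<le> f y + real n * dist x y"
      proof (cases "dist y x < d")
        case True
        then have "\<bar>f y - f x\<bar> < e / 2" using d(2) by (simp add: dist_real_def)
        moreover have "0 \<le> real n * dist x y" by simp
        ultimately show ?thesis by (smt (verit))
      next
        case False
        then have "real n * d \<le> real n * dist x y" by (simp add: dist_commute mult_left_mono)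
        then have "real n * dist x y \<ge> 2 * B" using nd by linarith
        moreover have "- B \<le> f y" "f x \<le> B" using assms(1)[of y] assms(1)[of x] by linarith+
        ultimately show ?thesis using e by linarith
      qed
    qed simp
    moreover have "infconv f (real n) x \<le> f x" by (rule infconv_le[where f=f and B=B, OF assms(1)]) simp
    ultimately show "norm (infconv f (real n) x - f x) < e" using e by simp
  qed
qed

lemma lower_approx:
  fixes f :: "'a::euclidean_space \<Rightarrow> real" and P :: "'a measure"
  assumes "P \<in> Pq q" "q \<ge> 1" "\<And>u. \<bar>f u\<bar> \<le> B" "continuous_on UNIV f" "e > 0"
  shows "\<exists>g K. K > 0 \<and> pseudo_lipschitz (q - 1) K g \<and> (\<forall>x. g x \<le> f x) \<and>
     continuous_on UNIV g \<and> (\<forall>x. \<bar>g x\<bar> \<le> B) \<and> integral\<^sup>L P g > integral\<^sup>L P f - e"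
proof -
  have B0: "B \<ge> 0" using assms(3)[of 0] by linarith
  have fm: "f \<in> borel_measurable P" using Pq_cont_meas[OF assms(1,4)] .
  have PLn: "pseudo_lipschitz (q - 1) (real n) (infconv f (real n))" for n
    by (rule infconv_PL[where f=f and B=B, OF assms(3)]) simp
  have contn: "continuous_on UNIV (infconv f (real n))" for n
    using PL_cont[OF PLn assms(2)] by simp
  have bnd: "\<bar>infconv f (real n) x\<bar> \<le> B" for n x
    using infconv_le[where f=f and B=B and k="real n" and x=x, OF assms(3)] infconv_ge[where f=f and B=B and k="real n" and x=x, OF assms(3)] assms(3)[of x]
    by (simp add: abs_le_iff)
  have "(\<lambda>n. integral\<^sup>L P (infconv f (real n))) \<longlonglongrightarrow> integral\<^sup>L P f"
  proof (rule integral_dominated_convergence[where w="\<lambda>x. B"])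
    show "f \<in> borel_measurable P" by (rule fm)
    show "infconv f (real n) \<in> borel_measurable P" for n using Pq_cont_meas[OF assms(1) contn] .
    show "integrable P (\<lambda>x. B)" by (rule Pq_integrable_const[OF assms(1)])
    show "AE x in P. (\<lambda>n. infconv f (real n) x) \<longlonglongrightarrow> f x"
      using infconv_lim[where f=f and B=B, OF assms(3,4)] by simp
    show "AE x in P. norm (infconv f (real n) x) \<le> B" for n using bnd by simp
  qed
  then have "eventually (\<lambda>n. integral\<^sup>L P (infconv f (real n)) > integral\<^sup>L P f - e) sequentially"
    using assms(5) by (intro order_tendstoD(1)) auto
  then obtain n where n: "integral\<^sup>L P (infconv f (real n)) > integral\<^sup>L P f - e"
    by (meson eventually_sequentially order_refl)
  have PL1: "pseudo_lipschitz (q - 1) (real n + 1) (infconv f (real n))"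
    by (rule PL_mono[OF PLn]) simp
  show ?thesis
    using n PL1 contn bnd infconv_le[where f=f and B=B, OF assms(3)]
    by (intro exI[of _ "infconv f (real n)"] exI[of _ "real n + 1"]) auto
qed

lemma bc_integrable:
  fixes g :: "'a::euclidean_space \<Rightarrow> real"
  assumes "M \<in> Pq q" "continuous_on UNIV g" "\<And>u. \<bar>g u\<bar> \<le> B"
  shows "integrable M g"
  by (rule Pq_integrable_dom[OF assms(1) borel_measurable_continuous_onI[OF assms(2)], of B 0])
     (use assms(3) in simp)

lemma weak_conv_fwd:
  fixes P :: "'a::euclidean_space measure" and Q :: "nat \<Rightarrow> 'a measure"
  assumes q1: "q \<ge> 1" and P: "P \<in> Pq q" and Q: "\<And>n. Q n \<in> Pq q"
    and d: "(\<lambda>n. d_pLip (q - 1) (Q n) P) \<longlonglongrightarrow> 0"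
  shows "weak_conv_seq Q P"
  unfolding weak_conv_seq_def
proof (intro allI impI)
  fix f :: "'a \<Rightarrow> real"
  assume "continuous_on UNIV f \<and> bounded (range f)"
  then have fc: "continuous_on UNIV f" and "bounded (range f)" by auto
  then obtain B where B: "\<And>u. \<bar>f u\<bar> \<le> B" unfolding bounded_iff by auto
  have mfc: "continuous_on UNIV (\<lambda>x. - f x)" using fc by (intro continuous_intros)
  have mB: "\<And>u. \<bar>- f u\<bar> \<le> B" using B by simp
  show "(\<lambda>n. integral\<^sup>L (Q n) f) \<longlonglongrightarrow> integral\<^sup>L P f"
  proof (rule LIMSEQ_I)
    fix e :: real assume e: "e > 0"
    define e' where "e' = e / 3"
    have e': "e' > 0" using e by (simp add: e'_def)
    obtain g1 K1 where g1: "K1 > 0" "pseudo_lipschitz (q - 1) K1 g1" "\<And>x. g1 x \<le> f x"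
      "continuous_on UNIV g1" "\<And>x. \<bar>g1 x\<bar> \<le> B" "integral\<^sup>L P g1 > integral\<^sup>L P f - e'"
      using lower_approx[where f=f and B=B, OF P q1 B fc e'] by blast
    obtain g2 K2 where g2: "K2 > 0" "pseudo_lipschitz (q - 1) K2 g2" "\<And>x. g2 x \<le> - f x"
      "continuous_on UNIV g2" "\<And>x. \<bar>g2 x\<bar> \<le> B" "integral\<^sup>L P g2 > integral\<^sup>L P (\<lambda>x. - f x) - e'"
      using lower_approx[where f="\<lambda>x. - f x" and B=B, OF P q1 mB mfc e'] by blast
    have ev1: "eventually (\<lambda>n. d_pLip (q - 1) (Q n) P < e' / K1) sequentially"
      using d e' g1(1) by (intro order_tendstoD(2)) auto
    have ev2: "eventually (\<lambda>n. d_pLip (q - 1) (Q n) P < e' / K2) sequentially"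
      using d e' g2(1) by (intro order_tendstoD(2)) auto
    obtain N where N: "\<And>n. n \<ge> N \<Longrightarrow> d_pLip (q - 1) (Q n) P < e' / K1 \<and> d_pLip (q - 1) (Q n) P < e' / K2"
      using eventually_conj[OF ev1 ev2] unfolding eventually_sequentially by blast
    show "\<exists>no. \<forall>n\<ge>no. norm (integral\<^sup>L (Q n) f - integral\<^sup>L P f) < e"
    proof (intro exI allI impI)
      fix n assume "n \<ge> N"
      note Nn = N[OF this]
      have iF: "integrable (Q n) f" by (rule bc_integrable[OF Q fc B])
      have iF': "integrable (Q n) (\<lambda>x. - f x)" by (rule bc_integrable[OF Q mfc mB])
      have i1: "integrable (Q n) g1" by (rule bc_integrable[OF Q g1(4) g1(5)])
      have i2: "integrable (Q n) g2" by (rule bc_integrable[OF Q g2(4) g2(5)])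
      have m1: "integral\<^sup>L (Q n) g1 \<le> integral\<^sup>L (Q n) f"
        using i1 iF g1(3) by (intro integral_mono) auto
      have m2: "integral\<^sup>L (Q n) g2 \<le> integral\<^sup>L (Q n) (\<lambda>x. - f x)"
        using i2 iF' g2(3) by (intro integral_mono) auto
      have s1: "\<bar>integral\<^sup>L (Q n) g1 - integral\<^sup>L P g1\<bar> \<le> K1 * d_pLip (q - 1) (Q n) P"
        by (rule d_scaled[OF Q P q1 g1(2,1)])
      have s2: "\<bar>integral\<^sup>L (Q n) g2 - integral\<^sup>L P g2\<bar> \<le> K2 * d_pLip (q - 1) (Q n) P"
        by (rule d_scaled[OF Q P q1 g2(2,1)])
      have "K1 * d_pLip (q - 1) (Q n) P < K1 * (e' / K1)"
        using Nn g1(1) by (intro mult_strict_left_mono) auto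
      then have t1: "K1 * d_pLip (q - 1) (Q n) P < e'" using g1(1) by simp
      have "K2 * d_pLip (q - 1) (Q n) P < K2 * (e' / K2)"
        using Nn g2(1) by (intro mult_strict_left_mono) auto
      then have t2: "K2 * d_pLip (q - 1) (Q n) P < e'" using g2(1) by simp
      have lo: "integral\<^sup>L (Q n) f > integral\<^sup>L P f - 2 * e'"
        using m1 s1 t1 g1(6) by linarith
      have "- integral\<^sup>L (Q n) f > - integral\<^sup>L P f - 2 * e'"
        using m2 s2 t2 g2(6) by simp
      then show "norm (integral\<^sup>L (Q n) f - integral\<^sup>L P f) < e"
        using lo e'_def e by (simp add: abs_less_iff)
    qed
  qed
qed

lemma tail_small:
  fixes P :: "'a::euclidean_space measure"
  assumes P: "P \<in> Pq q" and e: "e > 0"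
  shows "\<exists>R\<ge>0. integral\<^sup>L P (\<lambda>x. if R < norm x then 1 + norm x powr q else 0) < e"
proof -
  have meas: "(\<lambda>x. if real m < norm x then 1 + norm x powr q else 0) \<in> borel_measurable P" for m
    by (rule Pq_meas[OF P]) measurable
  have "(\<lambda>m. integral\<^sup>L P (\<lambda>x. if real m < norm x then 1 + norm x powr q else 0)) \<longlonglongrightarrow> integral\<^sup>L P (\<lambda>x. 0)"
  proof (rule integral_dominated_convergence[where w="\<lambda>x. 1 + norm x powr q"])
    show "(\<lambda>x. 0::real) \<in> borel_measurable P" by simp
    show "(\<lambda>x. if real m < norm x then 1 + norm x powr q else 0) \<in> borel_measurable P" for m by (rule meas)
    show "integrable P (\<lambda>x. 1 + norm x powr q)" using Pq_integrable_w[OF P, of 1 1] by simp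
    show "AE x in P. (\<lambda>m. if real m < norm x then 1 + norm x powr q else 0) \<longlonglongrightarrow> 0"
    proof (rule AE_I2)
      fix x :: 'a
      obtain N :: nat where "real N > norm x" using reals_Archimedean2 by blast
      then have "eventually (\<lambda>m. (if real m < norm x then 1 + norm x powr q else 0) = 0) sequentially"
        unfolding eventually_sequentially by (intro exI[of _ N]) auto
      then show "(\<lambda>m. if real m < norm x then 1 + norm x powr q else 0) \<longlonglongrightarrow> 0"
        by (rule tendsto_eventually)
    qed
    show "AE x in P. norm (if real m < norm x then 1 + norm x powr q else 0) \<le> 1 + norm x powr q" for m
      by (rule AE_I2) (simp add: add_nonneg_nonneg)
  qed
  then have "eventually (\<lambda>m. integral\<^sup>L P (\<lambda>x. if real m < norm x then 1 + norm x powr q else 0) < e) sequentially"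
    using e by (intro order_tendstoD(2)) auto
  then obtain m where "integral\<^sup>L P (\<lambda>x. if real m < norm x then 1 + norm x powr q else 0) < e"
    by (meson eventually_sequentially order_refl)
  then show ?thesis by (intro exI[of _ "real m"]) auto
qed

definition theta :: "real \<Rightarrow> 'a::metric_space \<Rightarrow> 'a \<Rightarrow> real" where
  "theta d k x = max 0 (2 * d - dist x k)"

definition psi :: "'a::metric_space set \<Rightarrow> real \<Rightarrow> 'a \<Rightarrow> 'a \<Rightarrow> real" where
  "psi K d k x = theta d k x / max d (\<Sum>j\<in>K. theta d j x)"

definition Phi :: "'a::metric_space set \<Rightarrow> real \<Rightarrow> 'a \<Rightarrow> real" where
  "Phi K d x = (\<Sum>k\<in>K. psi K d k x)"

lemma theta_nonneg: "theta d k x \<ge> 0"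
  by (simp add: theta_def)

lemma theta_cont: "continuous_on UNIV (theta d k)"
  unfolding theta_def by (intro continuous_intros)

lemma psi_nonneg: "d > 0 \<Longrightarrow> psi K d k x \<ge> 0"
  unfolding psi_def using theta_nonneg[of d k x] by (intro divide_nonneg_pos) auto

lemma psi_cont:
  assumes "d > 0"
  shows "continuous_on UNIV (psi K d k)"
proof -
  have "continuous_on UNIV (\<lambda>x. theta d k x / max d (\<Sum>j\<in>K. theta d j x))"
    using assms by (intro continuous_intros theta_cont continuous_on_sum) auto
  then show ?thesis unfolding psi_def by simp
qed

lemma Phi_cont:
  assumes "d > 0"
  shows "continuous_on UNIV (Phi K d)"
  unfolding Phi_def using psi_cont[OF assms] by (intro continuous_on_sum) auto

lemma Phi_eq: "d > 0 \<Longrightarrow> Phi K d x = (\<Sum>j\<in>K. theta d j x) / max d (\<Sum>j\<in>K. theta d j x)"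
  unfolding Phi_def psi_def by (simp add: sum_divide_distrib)

lemma Phi_nonneg: "d > 0 \<Longrightarrow> Phi K d x \<ge> 0"
  unfolding Phi_def by (intro sum_nonneg) (simp add: psi_nonneg)

lemma Phi_le1:
  assumes "d > 0"
  shows "Phi K d x \<le> 1"
proof -
  have "(\<Sum>j\<in>K. theta d j x) \<le> max d (\<Sum>j\<in>K. theta d j x)" by simp
  moreover have "max d (\<Sum>j\<in>K. theta d j x) > 0" using assms by simp
  ultimately have "(\<Sum>j\<in>K. theta d j x) / max d (\<Sum>j\<in>K. theta d j x) \<le> 1"
    by (simp add: divide_le_eq_1)
  then show ?thesis using Phi_eq[OF assms, of K x] by simp
qed

lemma psi_le_Phi:
  assumes "d > 0" "finite K" "k \<in> K"
  shows "psi K d k x \<le> Phi K d x"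
  unfolding Phi_def using assms psi_nonneg[OF assms(1)] by (intro member_le_sum) auto

lemma psi_support:
  assumes "psi K d k x \<noteq> 0"
  shows "dist x k < 2 * d"
  using assms unfolding psi_def theta_def by (auto simp: max_def split: if_splits)

lemma Phi_one:
  assumes "d > 0" "finite K" "\<exists>k\<in>K. dist x k < d"
  shows "Phi K d x = 1"
proof -
  obtain k where k: "k \<in> K" "dist x k < d" using assms(3) by blast
  have "theta d k x \<ge> d" using k unfolding theta_def by simp
  moreover have "theta d k x \<le> (\<Sum>j\<in>K. theta d j x)"
    using assms(2) k(1) theta_nonneg by (intro member_le_sum) auto
  ultimately have "(\<Sum>j\<in>K. theta d j x) \<ge> d" by linarith
  then have "max d (\<Sum>j\<in>K. theta d j x) = (\<Sum>j\<in>K. theta d j x)" "(\<Sum>j\<in>K. theta d j x) > 0"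
    using assms(1) by auto
  then show ?thesis using Phi_eq[OF assms(1), of K x] by simp
qed

lemma Phi_zero:
  fixes x :: "'a::real_normed_vector"
  assumes "d > 0" "2 * d \<le> 1" "K \<subseteq> cball 0 R" "norm x \<ge> R + 1"
  shows "Phi K d x = 0"
proof -
  have "theta d k x = 0" if "k \<in> K" for k
  proof -
    have "norm k \<le> R" using that assms(3) by auto
    then have "dist x k \<ge> 1" using assms(4) norm_triangle_ineq2[of x k] by (simp add: dist_norm)
    then show ?thesis using assms(2) unfolding theta_def by simp
  qed
  then show ?thesis using Phi_eq[OF assms(1), of K x] by simp
qed

lemma approx_pt:
  fixes f :: "'a::euclidean_space \<Rightarrow> real"
  assumes q1: "q \<ge> 1" and PL: "pseudo_lipschitz (q - 1) 1 f" and d: "d > 0" "2 * d \<le> 1"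
    and K: "finite K" "K \<subseteq> cball 0 R"
  shows "\<bar>(f x - f 0) - (\<Sum>k\<in>K. (f k - f 0) * psi K d k x)\<bar>
           \<le> 2 * d * (3 + 2 * (R + 1) powr q) + 3 * ((1 + norm x powr q) * (1 - Phi K d x))"
proof -
  define L where "L = 3 + 2 * (R + 1) powr q"
  have L0: "L \<ge> 0" unfolding L_def by (simp add: add_nonneg_nonneg)
  have eq: "(f x - f 0) - (\<Sum>k\<in>K. (f k - f 0) * psi K d k x)
      = (f x - f 0) * (1 - Phi K d x) + (\<Sum>k\<in>K. (f x - f k) * psi K d k x)"
    unfolding Phi_def by (simp add: algebra_simps sum_distrib_left sum_subtractf[symmetric] sum.distrib[symmetric])
  have t2: "\<bar>\<Sum>k\<in>K. (f x - f k) * psi K d k x\<bar> \<le> 2 * d * L"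
  proof -
    have "\<bar>\<Sum>k\<in>K. (f x - f k) * psi K d k x\<bar> \<le> (\<Sum>k\<in>K. \<bar>(f x - f k) * psi K d k x\<bar>)"
      by (rule sum_abs)
    also have "\<dots> \<le> (\<Sum>k\<in>K. 2 * d * L * psi K d k x)"
    proof (rule sum_mono)
      fix k assume kK: "k \<in> K"
      show "\<bar>(f x - f k) * psi K d k x\<bar> \<le> 2 * d * L * psi K d k x"
      proof (cases "psi K d k x = 0")
        case True then show ?thesis by simp
      next
        case False
        then have dk: "dist x k < 2 * d" by (rule psi_support)
        have nk: "norm k \<le> R" using kK K(2) by auto
        have nk1: "norm k \<le> R + 1" using nk by simp
        have "norm x \<le> norm k + dist x k" using norm_triangle_ineq2[of x k] by (simp add: dist_norm)
        then have nx: "norm x \<le> R + 1" using nk dk d by linarith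
        have "\<bar>f x - f k\<bar> \<le> 1 * L * norm (x - k)"
          unfolding L_def by (rule PL_loc[OF PL q1 nx nk1]) simp
        also have "\<dots> \<le> L * (2 * d)" using dk L0 by (simp add: dist_norm mult_left_mono)
        finally have "\<bar>f x - f k\<bar> \<le> 2 * d * L" by (simp add: mult_ac)
        then show ?thesis using psi_nonneg[OF d(1), of K k x]
          by (simp add: abs_mult mult_right_mono)
      qed
    qed
    also have "\<dots> = 2 * d * L * Phi K d x" unfolding Phi_def by (simp add: sum_distrib_left)
    also have "\<dots> \<le> 2 * d * L * 1"
      using d L0 by (intro mult_left_mono Phi_le1) auto
    also have "\<dots> = 2 * d * L" by simp
    finally show ?thesis .
  qed
  have t1: "\<bar>(f x - f 0) * (1 - Phi K d x)\<bar> \<le> 3 * ((1 + norm x powr q) * (1 - Phi K d x))"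
  proof -
    have "0 \<le> 1 - Phi K d x" using Phi_le1[OF d(1)] by simp
    then have "\<bar>(f x - f 0) * (1 - Phi K d x)\<bar> = \<bar>f x - f 0\<bar> * (1 - Phi K d x)" by (simp add: abs_mult)
    also have "\<dots> \<le> 3 * (1 + norm x powr q) * (1 - Phi K d x)"
      using PL_bound[OF PL q1, of x] \<open>0 \<le> 1 - Phi K d x\<close> by (rule mult_right_mono)
    also have "\<dots> = 3 * ((1 + norm x powr q) * (1 - Phi K d x))" by (simp only: mult.assoc)
    finally show ?thesis .
  qed
  show ?thesis unfolding eq using t1 t2 unfolding L_def by linarith
qed

lemma psi_le2:
  assumes "d > 0"
  shows "psi K d k x \<le> 2"
proof -
  have "theta d k x \<le> 2 * d" unfolding theta_def using assms by simp
  also have "\<dots> \<le> 2 * max d (\<Sum>j\<in>K. theta d j x)" by simp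
  finally show ?thesis unfolding psi_def using assms by (simp add: pos_divide_le_eq)
qed

lemma psi_abs: "d > 0 \<Longrightarrow> \<bar>psi K d k x\<bar> \<le> 2"
  using psi_le2[of d K k x] psi_nonneg[of d K k x] by simp

lemma tw_integrable:
  fixes M :: "'a::euclidean_space measure"
  assumes M: "M \<in> Pq q" and d: "d > 0"
  shows "integrable M (\<lambda>x. (1 + norm x powr q) * (1 - Phi K d x))"
proof (rule Pq_integrable_dom[OF M, of _ 1 1])
  have [measurable]: "Phi K d \<in> borel_measurable borel"
    by (rule borel_measurable_continuous_onI[OF Phi_cont[OF d]])
  show "(\<lambda>x. (1 + norm x powr q) * (1 - Phi K d x)) \<in> borel_measurable borel" by measurable
  fix x :: 'a
  have "0 \<le> 1 - Phi K d x" "1 - Phi K d x \<le> 1" using Phi_le1[OF d] Phi_nonneg[OF d] by auto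
  moreover have "0 \<le> 1 + norm x powr q" by (simp add: add_nonneg_nonneg)
  ultimately have "(1 + norm x powr q) * (1 - Phi K d x) \<le> (1 + norm x powr q) * 1"
    "0 \<le> (1 + norm x powr q) * (1 - Phi K d x)"
    by (intro mult_left_mono mult_nonneg_nonneg; simp)+
  then show "\<bar>(1 + norm x powr q) * (1 - Phi K d x)\<bar> \<le> 1 + 1 * norm x powr q" by simp
qed

lemma approx_int:
  fixes f :: "'a::euclidean_space \<Rightarrow> real" and M :: "'a measure"
  assumes q1: "q \<ge> 1" and M: "M \<in> Pq q" and f: "f \<in> pLip (q - 1)" and d: "d > 0" "2 * d \<le> 1"
    and K: "finite K" "K \<subseteq> cball 0 R"
  shows "\<bar>(integral\<^sup>L M f - f 0) - (\<Sum>k\<in>K. (f k - f 0) * integral\<^sup>L M (psi K d k))\<bar>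
     \<le> 2 * d * (3 + 2 * (R + 1) powr q) + 3 * integral\<^sup>L M (\<lambda>x. (1 + norm x powr q) * (1 - Phi K d x))"
proof -
  have PL: "pseudo_lipschitz (q-1) 1 f" by (rule pLipD[OF f])
  have iF: "integrable M f" by (rule pLip_integrable[OF M q1 f])
  have iP: "integrable M (psi K d k)" for k
    by (rule bc_integrable[OF M psi_cont[OF d(1)] psi_abs[OF d(1)]])
  have iG: "integrable M (\<lambda>x. \<Sum>k\<in>K. (f k - f 0) * psi K d k x)"
    using iP by (intro Bochner_Integration.integrable_sum Bochner_Integration.integrable_mult_right) auto
  have eG: "integral\<^sup>L M (\<lambda>x. \<Sum>k\<in>K. (f k - f 0) * psi K d k x) = (\<Sum>k\<in>K. (f k - f 0) * integral\<^sup>L M (psi K d k))"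
    using iP by (subst Bochner_Integration.integral_sum) auto
  have iC: "integrable M (\<lambda>x. f 0)" by (rule Pq_integrable_const[OF M])
  have iT: "integrable M (\<lambda>x. (1 + norm x powr q) * (1 - Phi K d x))" by (rule tw_integrable[OF M d(1)])
  have i1: "integrable M (\<lambda>x. f x - f 0)" using iF iC by auto
  have i2: "integrable M (\<lambda>x. (f x - f 0) - (\<Sum>k\<in>K. (f k - f 0) * psi K d k x))" using i1 iG by auto
  have e2: "integral\<^sup>L M (\<lambda>x. (f x - f 0) - (\<Sum>k\<in>K. (f k - f 0) * psi K d k x))
      = (integral\<^sup>L M f - f 0) - (\<Sum>k\<in>K. (f k - f 0) * integral\<^sup>L M (psi K d k))"
    using i1 iG iF iC eG Pq_int_const[OF M, of "f 0"] by (simp add: integral_diff)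
  define c where "c = 2 * d * (3 + 2 * (R + 1) powr q)"
  have iU: "integrable M (\<lambda>x. c + 3 * ((1 + norm x powr q) * (1 - Phi K d x)))"
    using iT Pq_integrable_const[OF M, of c] by auto
  have eU: "integral\<^sup>L M (\<lambda>x. c + 3 * ((1 + norm x powr q) * (1 - Phi K d x)))
      = c + 3 * integral\<^sup>L M (\<lambda>x. (1 + norm x powr q) * (1 - Phi K d x))"
    using iT Pq_integrable_const[OF M, of c] Pq_int_const[OF M, of c] by simp
  have "\<bar>integral\<^sup>L M (\<lambda>x. (f x - f 0) - (\<Sum>k\<in>K. (f k - f 0) * psi K d k x))\<bar>
      \<le> integral\<^sup>L M (\<lambda>x. c + 3 * ((1 + norm x powr q) * (1 - Phi K d x)))"
    by (rule abs_int_le[OF i2 iU]) (unfold c_def, rule approx_pt[OF q1 PL d K])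
  then show ?thesis using e2 eU unfolding c_def by simp
qed

lemma unif_bound:
  fixes f :: "'a::euclidean_space \<Rightarrow> real" and M N :: "'a measure"
  assumes q1: "q \<ge> 1" and M: "M \<in> Pq q" and N: "N \<in> Pq q" and f: "f \<in> pLip (q - 1)"
    and d: "d > 0" "2 * d \<le> 1" and K: "finite K" "K \<subseteq> cball 0 R"
  shows "\<bar>integral\<^sup>L M f - integral\<^sup>L N f\<bar> \<le>
     2 * (2 * d * (3 + 2 * (R + 1) powr q))
     + 3 * integral\<^sup>L M (\<lambda>x. (1 + norm x powr q) * (1 - Phi K d x))
     + 3 * integral\<^sup>L N (\<lambda>x. (1 + norm x powr q) * (1 - Phi K d x))
     + 3 * (1 + R powr q) * (\<Sum>k\<in>K. \<bar>integral\<^sup>L M (psi K d k) - integral\<^sup>L N (psi K d k)\<bar>)"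
proof -
  have PL: "pseudo_lipschitz (q-1) 1 f" by (rule pLipD[OF f])
  define AM where "AM = (\<Sum>k\<in>K. (f k - f 0) * integral\<^sup>L M (psi K d k))"
  define AN where "AN = (\<Sum>k\<in>K. (f k - f 0) * integral\<^sup>L N (psi K d k))"
  have 1: "\<bar>(integral\<^sup>L M f - f 0) - AM\<bar> \<le> 2 * d * (3 + 2 * (R + 1) powr q) + 3 * integral\<^sup>L M (\<lambda>x. (1 + norm x powr q) * (1 - Phi K d x))"
    unfolding AM_def by (rule approx_int[OF q1 M f d K])
  have 2: "\<bar>(integral\<^sup>L N f - f 0) - AN\<bar> \<le> 2 * d * (3 + 2 * (R + 1) powr q) + 3 * integral\<^sup>L N (\<lambda>x. (1 + norm x powr q) * (1 - Phi K d x))"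
    unfolding AN_def by (rule approx_int[OF q1 N f d K])
  have "AM - AN = (\<Sum>k\<in>K. (f k - f 0) * (integral\<^sup>L M (psi K d k) - integral\<^sup>L N (psi K d k)))"
    unfolding AM_def AN_def by (simp add: sum_subtractf[symmetric] right_diff_distrib)
  also have "\<bar>\<dots>\<bar> \<le> (\<Sum>k\<in>K. \<bar>(f k - f 0) * (integral\<^sup>L M (psi K d k) - integral\<^sup>L N (psi K d k))\<bar>)"
    by (rule sum_abs)
  also have "\<dots> \<le> (\<Sum>k\<in>K. 3 * (1 + R powr q) * \<bar>integral\<^sup>L M (psi K d k) - integral\<^sup>L N (psi K d k)\<bar>)"
  proof (rule sum_mono)
    fix k assume "k \<in> K"
    then have "norm k \<le> R" using K by auto
    then have "norm k powr q \<le> R powr q" using q1 by (intro powr_mono2) auto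
    then have "3 * (1 + norm k powr q) \<le> 3 * (1 + R powr q)" by simp
    then have "\<bar>f k - f 0\<bar> \<le> 3 * (1 + R powr q)" using PL_bound[OF PL q1, of k] by (rule order_trans[rotated])
    then show "\<bar>(f k - f 0) * (integral\<^sup>L M (psi K d k) - integral\<^sup>L N (psi K d k))\<bar>
        \<le> 3 * (1 + R powr q) * \<bar>integral\<^sup>L M (psi K d k) - integral\<^sup>L N (psi K d k)\<bar>"
      by (simp add: abs_mult mult_right_mono)
  qed
  also have "\<dots> = 3 * (1 + R powr q) * (\<Sum>k\<in>K. \<bar>integral\<^sup>L M (psi K d k) - integral\<^sup>L N (psi K d k)\<bar>)"
    by (simp add: sum_distrib_left)
  finally have 3: "\<bar>AM - AN\<bar> \<le> 3 * (1 + R powr q) * (\<Sum>k\<in>K. \<bar>integral\<^sup>L M (psi K d k) - integral\<^sup>L N (psi K d k)\<bar>)" .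
  show ?thesis using 1 2 3 by linarith
qed

lemma backward:
  fixes P :: "'a::euclidean_space measure" and Q :: "nat \<Rightarrow> 'a measure"
  assumes q1: "q \<ge> 1" and P: "P \<in> Pq q" and Q: "\<And>n. Q n \<in> Pq q"
    and wc: "weak_conv_seq Q P"
    and mom: "(\<lambda>n. \<integral>x. norm x powr q \<partial>(Q n)) \<longlonglongrightarrow> (\<integral>x. norm x powr q \<partial>P)"
  shows "(\<lambda>n. d_pLip (q - 1) (Q n) P) \<longlonglongrightarrow> 0"
proof (rule LIMSEQ_I)
  fix r :: real assume r: "r > 0"
  define e where "e = r / 8"
  have e: "e > 0" using r by (simp add: e_def)
  obtain R where R: "R \<ge> 0" "integral\<^sup>L P (\<lambda>x. if R < norm x then 1 + norm x powr q else 0) < e"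
    using tail_small[OF P e] by blast
  define L where "L = 3 + 2 * (R + 1) powr q"
  have L: "L > 0" unfolding L_def by (simp add: add_pos_nonneg)
  define d where "d = min (1/2) (e / (4 * L))"
  have d: "d > 0" "2 * d \<le> 1" using e L by (auto simp: d_def)
  have dL: "2 * (2 * d * L) \<le> e"
  proof -
    have "d \<le> e / (4 * L)" by (simp add: d_def)
    then have "d * (4 * L) \<le> e" using L by (simp add: pos_le_divide_eq)
    then show ?thesis by (simp add: mult_ac)
  qed
  have "\<forall>e>0. \<exists>k. finite k \<and> k \<subseteq> cball (0::'a) R \<and> cball 0 R \<subseteq> (\<Union>x\<in>k. ball x e)"
    by (rule seq_compact_imp_totally_bounded[OF compact_imp_seq_compact[OF compact_cball]])
  then obtain K where "finite K \<and> K \<subseteq> cball (0::'a) R \<and> cball 0 R \<subseteq> (\<Union>x\<in>K. ball x d)"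
    using d(1) by (elim allE[of _ d] impE exE) auto
  then have K: "finite K" "K \<subseteq> cball (0::'a) R" "cball 0 R \<subseteq> (\<Union>x\<in>K. ball x d)" by auto
  define T where "T = (\<lambda>M. integral\<^sup>L M (\<lambda>x. (1 + norm x powr q) * (1 - Phi K d x)))"
  define D where "D = (\<lambda>M. \<Sum>k\<in>K. \<bar>integral\<^sup>L M (psi K d k) - integral\<^sup>L P (psi K d k)\<bar>)"
  define Bn where "Bn = (\<lambda>n. 2 * (2 * d * L) + 3 * T (Q n) + 3 * T P + 3 * (1 + R powr q) * D (Q n))"
  have dle: "d_pLip (q - 1) (Q n) P \<le> Bn n" for n
    unfolding Bn_def T_def D_def L_def
    by (rule d_least) (rule unif_bound[OF q1 Q P _ d K(1,2)])
  have dge: "d_pLip (q - 1) (Q n) P \<ge> 0" for n by (rule d_nonneg[OF Q P q1])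
  have wcI: "(\<lambda>n. integral\<^sup>L (Q n) g) \<longlonglongrightarrow> integral\<^sup>L P g"
    if "continuous_on UNIV g" "\<And>u. \<bar>g u\<bar> \<le> B" for g :: "'a \<Rightarrow> real" and B
  proof -
    have "bounded (range g)" unfolding bounded_iff using that(2) by auto
    then show ?thesis using wc that(1) unfolding weak_conv_seq_def by blast
  qed
  have wcont: "continuous_on UNIV (\<lambda>x::'a. norm x powr q)"
    using PL_cont[OF powq_PL[OF q1] q1] q1 by simp
  define h where "h = (\<lambda>x. (1 + norm x powr q) * Phi K d x)"
  have hc: "continuous_on UNIV h" unfolding h_def
    by (intro continuous_on_mult continuous_on_add continuous_on_const wcont Phi_cont[OF d(1)])
  have hb: "\<bar>h u\<bar> \<le> 1 + (R + 1) powr q" for u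
  proof (cases "norm u \<ge> R + 1")
    case True
    then show ?thesis using Phi_zero[OF d K(2) True] by (simp add: h_def add_nonneg_nonneg)
  next
    case False
    then have "norm u powr q \<le> (R + 1) powr q" using q1 by (intro powr_mono2) auto
    moreover have "0 \<le> Phi K d u" "Phi K d u \<le> 1" using Phi_nonneg[OF d(1)] Phi_le1[OF d(1)] by auto
    moreover have "0 \<le> 1 + norm u powr q" by (simp add: add_nonneg_nonneg)
    ultimately have "(1 + norm u powr q) * Phi K d u \<le> (1 + norm u powr q) * 1"
      "0 \<le> (1 + norm u powr q) * Phi K d u"
      by (intro mult_left_mono mult_nonneg_nonneg; simp)+
    then show ?thesis using \<open>norm u powr q \<le> (R + 1) powr q\<close> by (simp add: h_def)
  qed
  have Teq: "T M = (1 + integral\<^sup>L M (\<lambda>x. norm x powr q)) - integral\<^sup>L M h" if M: "M \<in> Pq q" for M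
  proof -
    have ih: "integrable M h" by (rule bc_integrable[OF M hc hb])
    have "T M = integral\<^sup>L M (\<lambda>x. (1 + 1 * norm x powr q) - h x)"
      unfolding T_def h_def by (rule arg_cong[where f="integral\<^sup>L M"]) (auto simp: algebra_simps)
    also have "\<dots> = integral\<^sup>L M (\<lambda>x. 1 + 1 * norm x powr q) - integral\<^sup>L M h"
      using ih Pq_integrable_w[OF M, of 1 1] by (simp add: integral_diff)
    also have "\<dots> = (1 + integral\<^sup>L M (\<lambda>x. norm x powr q)) - integral\<^sup>L M h"
      using Pq_integral_w[OF M, of 1 1] by simp
    finally show ?thesis .
  qed
  have Tlim: "(\<lambda>n. T (Q n)) \<longlonglongrightarrow> T P"
  proof -
    have "(\<lambda>n. (1 + integral\<^sup>L (Q n) (\<lambda>x. norm x powr q)) - integral\<^sup>L (Q n) h)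
        \<longlonglongrightarrow> (1 + integral\<^sup>L P (\<lambda>x. norm x powr q)) - integral\<^sup>L P h"
      by (intro tendsto_intros mom wcI[OF hc hb])
    then show ?thesis using Teq[OF Q] Teq[OF P] by simp
  qed
  have Dlim: "(\<lambda>n. D (Q n)) \<longlonglongrightarrow> 0"
  proof -
    have "(\<lambda>n. integral\<^sup>L (Q n) (psi K d k)) \<longlonglongrightarrow> integral\<^sup>L P (psi K d k)" for k
      by (rule wcI[OF psi_cont[OF d(1)] psi_abs[OF d(1)]])
    then have "(\<lambda>n. \<bar>integral\<^sup>L (Q n) (psi K d k) - integral\<^sup>L P (psi K d k)\<bar>) \<longlonglongrightarrow> \<bar>integral\<^sup>L P (psi K d k) - integral\<^sup>L P (psi K d k)\<bar>" for k
      by (intro tendsto_intros)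
    then have "(\<lambda>n. D (Q n)) \<longlonglongrightarrow> (\<Sum>k\<in>K. \<bar>integral\<^sup>L P (psi K d k) - integral\<^sup>L P (psi K d k)\<bar>)"
      unfolding D_def by (intro tendsto_sum) auto
    then show ?thesis by simp
  qed
  have Blim: "Bn \<longlonglongrightarrow> 2 * (2 * d * L) + 3 * T P + 3 * T P + 3 * (1 + R powr q) * 0"
    unfolding Bn_def by (intro tendsto_intros Tlim Dlim)
  have TP: "T P < e"
  proof -
    have it: "integrable P (\<lambda>x. if R < norm x then 1 + norm x powr q else 0)"
    proof (rule Pq_integrable_dom[OF P, of _ 1 1])
      show "(\<lambda>x. if R < norm x then 1 + norm x powr q else 0) \<in> borel_measurable borel" by measurable
      fix x :: 'a show "\<bar>if R < norm x then 1 + norm x powr q else 0\<bar> \<le> 1 + 1 * norm x powr q"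
        by (simp add: add_nonneg_nonneg)
    qed
    have "T P \<le> integral\<^sup>L P (\<lambda>x. if R < norm x then 1 + norm x powr q else 0)"
      unfolding T_def
    proof (rule integral_mono[OF tw_integrable[OF P d(1)] it])
      fix x :: 'a
      show "(1 + norm x powr q) * (1 - Phi K d x) \<le> (if R < norm x then 1 + norm x powr q else 0)"
      proof (cases "R < norm x")
        case True
        have "0 \<le> Phi K d x" using Phi_nonneg[OF d(1)] by auto
        moreover have "0 \<le> 1 + norm x powr q" by (simp add: add_nonneg_nonneg)
        ultimately have "(1 + norm x powr q) * (1 - Phi K d x) \<le> (1 + norm x powr q) * 1"
          by (intro mult_left_mono) auto
        then show ?thesis using True by simp
      next
        case False
        then have "x \<in> cball 0 R" by simp
        then obtain k where "k \<in> K" "x \<in> ball k d" using K(3) by blast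
        then have "Phi K d x = 1" by (intro Phi_one[OF d(1) K(1)] bexI[of _ k]) (auto simp: dist_commute)
        then show ?thesis using False by simp
      qed
    qed
    then show ?thesis using R(2) by linarith
  qed
  have "2 * (2 * d * L) + 3 * T P + 3 * T P + 3 * (1 + R powr q) * 0 < r"
  proof -
    have "3 * (1 + R powr q) * 0 = (0::real)" by simp
    then show ?thesis using dL TP r unfolding e_def by linarith
  qed
  then have "eventually (\<lambda>n. Bn n < r) sequentially"
    by (rule order_tendstoD(2)[OF Blim])
  then obtain N where N: "\<And>n. n \<ge> N \<Longrightarrow> Bn n < r" unfolding eventually_sequentially by blast
  show "\<exists>no. \<forall>n\<ge>no. norm (d_pLip (q - 1) (Q n) P - 0) < r"
  proof (intro exI allI impI)
    fix n assume "n \<ge> N"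
    then have "d_pLip (q - 1) (Q n) P < r" using N dle[of n] by force
    then show "norm (d_pLip (q - 1) (Q n) P - 0) < r" using dge[of n] by simp
  qed
qed

theorem mainTheorem2:
  fixes q :: real and P :: "'a::euclidean_space measure" and Q :: "nat \<Rightarrow> 'a measure"
  assumes "q \<ge> 1" and "P \<in> Pq q" and "\<And>n. Q n \<in> Pq q"
  shows "(\<lambda>n. d_pLip (q - 1) (Q n) P) \<longlonglongrightarrow> 0 \<longleftrightarrow>
         (weak_conv_seq Q P \<and>
          (\<lambda>n. \<integral>x. norm x powr q \<partial>(Q n)) \<longlonglongrightarrow> (\<integral>x. norm x powr q \<partial>P))"
  using weak_conv_fwd[where Q=Q and P=P and q=q, OF assms] moment_conv[where Q=Q and P=P and q=q, OF assms]
    backward[where Q=Q and P=P and q=q, OF assms] by blast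

end
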